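(* Let $\mathcal{E}$ be a quantum channel on $\mathbb{C}^d$, $M \ge 2$ and $N \ge 2$ integers. Let $\hat V_1,\dots,\hat V_M$ be i.i.d. from a unitary $4$-design on $\mathbb{C}^d$, $|\psi_i\rangle = \hat V_i|0\rangle$, $f_i := f_{\mathcal{E}}(\psi_i)$, and, conditional on $\psi_i$, let $X_{i,1},\dots,X_{i,N}\in\{0,1\}$ be i.i.d. Bernoulli($f_i$), with the data for different $i$ independent. Let $\hat F = \frac{1}{MN}\sum_{i=1}^M\sum_{s=1}^N X_{i,s}$. Then $$\mathrm{Var}(\hat F) = \frac{D^2}{M} + \frac{1}{MN}\left(F - \int d\psi\, f_{\mathcal{E}}(\psi)^2\right),$$ and in particular $\mathrm{Var}(\hat F) \le \frac{D^2}{M} + \frac{1}{4MN}$.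
   Context: $f_{\mathcal{E}}(\psi) := \langle\psi|\mathcal{E}(|\psi\rangle\langle\psi|)|\psi\rangle$. With $d\psi$ the Haar-induced probability measure on unit vectors of $\mathbb{C}^d$, $F := \int d\psi\, f_{\mathcal{E}}(\psi)$ and $D^2 := \int d\psi\, f_{\mathcal{E}}(\psi)^2 - F^2$. $|0\rangle$ is a fixed unit vector. A unitary $t$-design is a probability distribution on $U(d)$ such that for all $k\le t$ and all operators $\hat O$ on $(\mathbb{C}^d)^{\otimes k}$, $\mathbb{E}[\hat V^{\otimes k}\hat O\hat V^{\dagger\otimes k}] = \int \hat U^{\otimes k}\hat O\hat U^{\dagger\otimes k}\,d\hat U$ with $d\hat U$ the Haar measure. *)

theory Defs
  imports "HOL-Analysis.Analysis" "HOL-Probability.Probability"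
begin

text \<open>Matrices on C^d are complex^'d^'d (d = CARD('d)), vectors are complex^'d.\<close>

definition adj :: "complex^'d^'d \<Rightarrow> complex^'d^'d" where
  "adj A = (\<chi> i j. cnj (A $ j $ i))"

definition is_unitary :: "complex^'d^'d \<Rightarrow> bool" where
  "is_unitary U \<longleftrightarrow> U ** adj U = mat 1 \<and> adj U ** U = mat 1"

definition msmult :: "complex \<Rightarrow> complex^'d^'d \<Rightarrow> complex^'d^'d" where
  "msmult c A = (\<chi> i j. c * A $ i $ j)"

definition sesq :: "complex^'d \<Rightarrow> complex^'d^'d \<Rightarrow> complex^'d \<Rightarrow> complex" where
  "sesq w A v = (\<Sum>i\<in>UNIV. cnj (w $ i) * (A *v v) $ i)"

definition nonneg_c :: "complex \<Rightarrow> bool" where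
  "nonneg_c z \<longleftrightarrow> Im z = 0 \<and> 0 \<le> Re z"

text \<open>Positive semidefiniteness of the dk x dk block matrix with d x d blocks X a b (a,b<k),
  i.e. of the operator sum_{a,b} X a b \<otimes> |a><b| on C^d \<otimes> C^k.\<close>
definition block_psd :: "nat \<Rightarrow> (nat \<Rightarrow> nat \<Rightarrow> complex^'d^'d) \<Rightarrow> bool" where
  "block_psd k X \<longleftrightarrow>
     (\<forall>w :: nat \<Rightarrow> complex^'d. nonneg_c (\<Sum>a<k. \<Sum>b<k. sesq (w a) (X a b) (w b)))"

text \<open>Quantum channel = complex-linear, completely positive, trace-preserving map.
  (E \<otimes> id_k) maps sum_{a,b} X a b \<otimes> |a><b| to sum_{a,b} E (X a b) \<otimes> |a><b|.\<close>
definition quantum_channel :: "(complex^'d^'d \<Rightarrow> complex^'d^'d) \<Rightarrow> bool" where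
  "quantum_channel E \<longleftrightarrow>
     (\<forall>A B. E (A + B) = E A + E B) \<and> (\<forall>c A. E (msmult c A) = msmult c (E A)) \<and>
     (\<forall>k X. block_psd k X \<longrightarrow> block_psd k (\<lambda>a b. E (X a b))) \<and>
     (\<forall>A. trace (E A) = trace A)"

definition ketbra :: "complex^'d \<Rightarrow> complex^'d^'d" where
  "ketbra \<psi> = (\<chi> i j. \<psi> $ i * cnj (\<psi> $ j))"

text \<open>f_E(psi) = <psi| E(|psi><psi|) |psi> (real for a channel; we take the real part)\<close>
definition fid :: "(complex^'d^'d \<Rightarrow> complex^'d^'d) \<Rightarrow> complex^'d \<Rightarrow> real" where
  "fid E \<psi> = Re (sesq \<psi> (E (ketbra \<psi>)) \<psi>)"

text \<open>Haar measure on U(d): a (left-invariant) Borel probability measure concentrated on U(d).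
  It is unique, so assuming these properties of a parameter H pins down the Haar measure.\<close>
definition is_haar :: "(complex^'d^'d) measure \<Rightarrow> bool" where
  "is_haar H \<longleftrightarrow> prob_space H \<and> sets H = sets borel \<and> emeasure H {U. is_unitary U} = 1 \<and>
     (\<forall>W. is_unitary W \<longrightarrow> distr H borel (\<lambda>U. W ** U) = H)"

definition state_measure :: "(complex^'d^'d) measure \<Rightarrow> complex^'d \<Rightarrow> (complex^'d) measure" where
  "state_measure H z0 = distr H borel (\<lambda>U. U *v z0)"

text \<open>Tuples (i_0,...,i_{k-1}) indexing the standard basis of (C^d)^{\<otimes>k}.\<close>
definition tuples :: "nat \<Rightarrow> (nat \<Rightarrow> 'd::finite) set" where
  "tuples k = (\<Pi>\<^sub>E l\<in>{..<k}. UNIV)"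

text \<open>Matrix entry (i,j) of V^{\<otimes>k} O V^{\<dagger>\<otimes>k}, Op given by its matrix entries Op a b.\<close>
definition tconj :: "nat \<Rightarrow> complex^'d^'d \<Rightarrow> ((nat \<Rightarrow> 'd) \<Rightarrow> (nat \<Rightarrow> 'd) \<Rightarrow> complex)
      \<Rightarrow> (nat \<Rightarrow> 'd) \<Rightarrow> (nat \<Rightarrow> 'd) \<Rightarrow> complex" where
  "tconj k V Op i j = (\<Sum>a\<in>tuples k. \<Sum>b\<in>tuples k.
      (\<Prod>l<k. V $ i l $ a l) * Op a b * (\<Prod>l<k. cnj (V $ j l $ b l)))"

definition unitary_design :: "nat \<Rightarrow> (complex^'d^'d) measure \<Rightarrow> (complex^'d^'d) measure \<Rightarrow> bool" where
  "unitary_design t H \<nu> \<longleftrightarrow> prob_space \<nu> \<and> sets \<nu> = sets borel \<and> emeasure \<nu> {U. is_unitary U} = 1 \<and>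
     (\<forall>k\<le>t. \<forall>Op. \<forall>i\<in>tuples k. \<forall>j\<in>tuples k.
        (\<integral>V. tconj k V Op i j \<partial>\<nu>) = (\<integral>U. tconj k U Op i j \<partial>H))"

definition block_space :: "nat \<Rightarrow> ((complex^'d^'d) \<times> (nat \<Rightarrow> bool)) measure" where
  "block_space N = (borel :: (complex^'d^'d) measure) \<Otimes>\<^sub>M (\<Pi>\<^sub>M s\<in>{..<N}. count_space UNIV)"

definition block_law :: "(complex^'d^'d \<Rightarrow> complex^'d^'d) \<Rightarrow> complex^'d \<Rightarrow> nat \<Rightarrow>
     (complex^'d^'d) measure \<Rightarrow> ((complex^'d^'d) \<times> (nat \<Rightarrow> bool)) measure" where
  "block_law E z0 N \<nu> = \<nu> \<bind> (\<lambda>V. distr (\<Pi>\<^sub>M s\<in>{..<N}. measure_pmf (bernoulli_pmf (fid E (V *v z0))))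
                                        (block_space N) (\<lambda>X. (V, X)))"

definition data_law :: "(complex^'d^'d \<Rightarrow> complex^'d^'d) \<Rightarrow> complex^'d \<Rightarrow> nat \<Rightarrow> nat \<Rightarrow>
     (complex^'d^'d) measure \<Rightarrow> (nat \<Rightarrow> (complex^'d^'d) \<times> (nat \<Rightarrow> bool)) measure" where
  "data_law E z0 M N \<nu> = (\<Pi>\<^sub>M i\<in>{..<M}. block_law E z0 N \<nu>)"

definition Fhat :: "nat \<Rightarrow> nat \<Rightarrow> (nat \<Rightarrow> (complex^'d^'d) \<times> (nat \<Rightarrow> bool)) \<Rightarrow> real" where
  "Fhat M N \<omega> = (1 / (real M * real N)) * (\<Sum>i<M. \<Sum>s<N. of_bool (snd (\<omega> i) s))"

end

theory Submission
  imports Defs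
begin

definition monom :: "nat \<Rightarrow> (nat \<Rightarrow> 'd) \<Rightarrow> (nat \<Rightarrow> 'd) \<Rightarrow> complex^'d \<Rightarrow> complex" where
  "monom k i j \<psi> = (\<Prod>l<k. \<psi> $ i l) * (\<Prod>l<k. cnj (\<psi> $ j l))"

definition join :: "nat \<Rightarrow> (nat \<Rightarrow> 'a) \<Rightarrow> (nat \<Rightarrow> 'a) \<Rightarrow> nat \<Rightarrow> 'a" where
  "join a x y = (\<lambda>l. if l < a then x l else y (l - a))"

lemma prod_add_split: "(\<Prod>l<a+b. f l) = (\<Prod>l<a. f l) * (\<Prod>l<b. f (a + l)) " for f :: "nat \<Rightarrow> 'c::comm_monoid_mult"
  by (induction b) (auto simp: ac_simps)

lemma monom_mult: "monom a i j \<psi> * monom b i' j' \<psi> = monom (a+b) (join a i i') (join a j j') \<psi>"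
  unfolding monom_def prod_add_split join_def by (simp add: ac_simps)

inductive polyk :: "nat \<Rightarrow> (complex^'d \<Rightarrow> complex) \<Rightarrow> bool" where
  pk_monom: "polyk k (monom k i j)"
| pk_zero: "polyk k (\<lambda>_. 0)"
| pk_add: "polyk k f \<Longrightarrow> polyk k g \<Longrightarrow> polyk k (\<lambda>x. f x + g x)"
| pk_cmult: "polyk k f \<Longrightarrow> polyk k (\<lambda>x. c * f x)"

lemma pk_sum: "finite S \<Longrightarrow> (\<And>s. s \<in> S \<Longrightarrow> polyk k (f s)) \<Longrightarrow> polyk k (\<lambda>x. \<Sum>s\<in>S. f s x)"
  by (induction S rule: finite_induct) (auto intro: polyk.intros)

lemma pk_mult_monom: "polyk a f \<Longrightarrow> polyk (a+b) (\<lambda>x. f x * monom b i j x)"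
proof (induction rule: polyk.induct)
  case (pk_monom k i' j')
  then show ?case using polyk.pk_monom[of "k+b"] by (simp add: monom_mult)
next
  case (pk_zero k)
  then show ?case using polyk.pk_zero by simp
next
  case (pk_add k f g)
  then show ?case using polyk.pk_add[OF pk_add.IH] by (simp add: distrib_right)
next
  case (pk_cmult k f c)
  then show ?case using polyk.pk_cmult[OF pk_cmult.IH, of c] by (simp add: mult.assoc)
qed

lemma pk_mult: "polyk b g \<Longrightarrow> polyk a f \<Longrightarrow> polyk (a+b) (\<lambda>x. f x * g x)"
proof (induction rule: polyk.induct)
  case (pk_monom k i j)
  then show ?case by (rule pk_mult_monom)
next
  case (pk_zero k)
  then show ?case using polyk.pk_zero by simp
next
  case (pk_add k f' g')
  then show ?case using polyk.pk_add[OF pk_add.IH] by (simp add: distrib_left)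
next
  case (pk_cmult k f' c)
  then show ?case using polyk.pk_cmult[OF pk_cmult.IH, of c] by (simp add: ac_simps)
qed

lemma cnj_monom: "cnj (monom k i j x) = monom k j i x"
  unfolding monom_def by simp

lemma pk_cnj: "polyk k f \<Longrightarrow> polyk k (\<lambda>x. cnj (f x))"
  by (induction rule: polyk.induct) (auto simp: cnj_monom intro: polyk.intros)

lemma monom_restrict: "monom k i j = monom k (restrict i {..<k}) (restrict j {..<k})"
  unfolding monom_def by (intro ext arg_cong2[where f="(*)"] prod.cong) auto

lemma restrict_tuples: "restrict i {..<k} \<in> tuples k"
  unfolding tuples_def by auto

lemma mv_comp: "(V *v z) $ i = (\<Sum>c\<in>UNIV. V $ i $ c * z $ c)"
  by (simp add: matrix_vector_mult_def)

lemma tconj_mono: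
  fixes V :: "complex^'d^'d"
  assumes "I \<in> tuples k" "J \<in> tuples k"
  shows "tconj k V (\<lambda>a b. (\<Prod>l<k. z0 $ a l) * (\<Prod>l<k. cnj (z0 $ b l))) I J = monom k I J (V *v z0)"
proof -
  have A: "(\<Sum>a\<in>tuples k. \<Prod>l<k. V $ I l $ a l * z0 $ a l) = (\<Prod>l<k. (V *v z0) $ I l)"
    unfolding mv_comp tuples_def by (subst prod_sum_PiE) auto
  have B: "(\<Sum>b\<in>tuples k. \<Prod>l<k. cnj (V $ J l $ b l) * cnj (z0 $ b l)) = (\<Prod>l<k. cnj ((V *v z0) $ J l))"
    unfolding mv_comp tuples_def cnj_sum by (subst prod_sum_PiE) auto
  have "tconj k V (\<lambda>a b. (\<Prod>l<k. z0 $ a l) * (\<Prod>l<k. cnj (z0 $ b l))) I J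
      = (\<Sum>a\<in>tuples k. \<Sum>b\<in>tuples k. (\<Prod>l<k. V $ I l $ a l * z0 $ a l) * (\<Prod>l<k. cnj (V $ J l $ b l) * cnj (z0 $ b l)))"
    unfolding tconj_def prod.distrib by (intro sum.cong refl) (simp add: algebra_simps)
  also have "\<dots> = (\<Sum>a\<in>tuples k. \<Prod>l<k. V $ I l $ a l * z0 $ a l) * (\<Sum>b\<in>tuples k. \<Prod>l<k. cnj (V $ J l $ b l) * cnj (z0 $ b l))"
    by (simp add: sum_product)
  also have "\<dots> = monom k I J (V *v z0)" unfolding A B monom_def ..
  finally show ?thesis .
qed

lemma unitary_entry:
  fixes V :: "complex^'d^'d"
  assumes "is_unitary V" shows "norm (V $ i $ c) \<le> 1"
proof -
  have "(adj V ** V) $ c $ c = 1" using assms unfolding is_unitary_def by (simp add: mat_def)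
  hence "(\<Sum>r\<in>UNIV. cnj (V $ r $ c) * V $ r $ c) = 1"
    by (simp add: matrix_matrix_mult_def adj_def)
  moreover have "\<And>w. cnj w * w = complex_of_real ((cmod w)\<^sup>2)"
    by (simp only: complex_norm_square mult.commute)
  ultimately have "(\<Sum>r\<in>UNIV. complex_of_real ((cmod (V $ r $ c))\<^sup>2)) = 1"
    by simp
  hence s: "(\<Sum>r\<in>UNIV. (cmod (V $ r $ c))\<^sup>2) = 1"
    by (metis of_real_eq_1_iff of_real_sum)
  have "(cmod (V $ i $ c))\<^sup>2 \<le> (\<Sum>r\<in>UNIV. (cmod (V $ r $ c))\<^sup>2)"
    by (rule member_le_sum) auto
  with s have "(cmod (V $ i $ c))\<^sup>2 \<le> 1" by simp
  thus ?thesis by (simp add: power_le_one_iff abs_le_square_iff)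
qed

lemma unitary_mv_bound:
  fixes V :: "complex^'d^'d"
  assumes "is_unitary V" shows "norm ((V *v z) $ i) \<le> (\<Sum>c\<in>UNIV. norm (z $ c))"
proof -
  have "norm ((V *v z) $ i) \<le> (\<Sum>c\<in>UNIV. norm (V $ i $ c * z $ c))"
    unfolding matrix_vector_mult_def by (simp add: norm_sum)
  also have "\<dots> \<le> (\<Sum>c\<in>UNIV. norm (z $ c))"
    by (intro sum_mono) (simp add: norm_mult mult_left_le_one_le unitary_entry[OF assms])
  finally show ?thesis .
qed

lemma monom_bound:
  fixes V :: "complex^'d^'d"
  assumes "is_unitary V"
  shows "norm (monom k i j (V *v z)) \<le> (\<Sum>c\<in>UNIV. norm (z $ c)) ^ (2*k)"
proof -
  let ?K = "(\<Sum>c\<in>UNIV. norm (z $ c))"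
  have "norm (monom k i j (V *v z)) = (\<Prod>l<k. norm ((V *v z) $ i l)) * (\<Prod>l<k. norm ((V *v z) $ j l))"
    unfolding monom_def norm_mult prod_norm[symmetric] by simp
  also have "\<dots> \<le> (\<Prod>l<k. ?K) * (\<Prod>l<k. ?K)"
    by (intro mult_mono prod_mono conjI unitary_mv_bound[OF assms] prod_nonneg) (auto intro: sum_nonneg)
  also have "\<dots> = ?K ^ (2*k)" by (simp add: power_add[symmetric] mult_2)
  finally show ?thesis .
qed

lemma cont_monom: "continuous_on UNIV (\<lambda>V::complex^'d^'d. monom k i j (V *v z))"
  unfolding monom_def matrix_vector_mult_def
  by (intro continuous_intros)

lemma meas_monom: "(\<lambda>V::complex^'d^'d. monom k i j (V *v z)) \<in> borel_measurable borel"
  by (rule borel_measurable_continuous_onI[OF cont_monom])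

lemma integrable_monom:
  fixes \<mu> :: "(complex^'d^'d) measure"
  assumes "prob_space \<mu>" "sets \<mu> = sets borel" "AE V in \<mu>. is_unitary V"
  shows "integrable \<mu> (\<lambda>V. monom k i j (V *v z))"
proof -
  interpret prob_space \<mu> by fact
  show ?thesis
  proof (rule integrable_const_bound[where B="(\<Sum>c\<in>UNIV. norm (z $ c)) ^ (2*k)"])
    show "AE x in \<mu>. norm (monom k i j (x *v z)) \<le> (\<Sum>c\<in>UNIV. norm (z $ c)) ^ (2 * k)"
      using assms(3) by eventually_elim (rule monom_bound)
    show "(\<lambda>V. monom k i j (V *v z)) \<in> borel_measurable \<mu>"
      using meas_monom measurable_cong_sets[OF assms(2) refl] by blast
  qed
qed

lemma AE_unit:
  fixes \<mu> :: "(complex^'d^'d) measure"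
  assumes "prob_space \<mu>" "emeasure \<mu> {U. is_unitary U} = 1"
  shows "AE U in \<mu>. is_unitary U"
proof -
  interpret prob_space \<mu> by fact
  have "prob {U. is_unitary U} = 1" using assms(2) by (simp add: measure_def)
  from AE_prob_1[OF this] show ?thesis by simp
qed

definition good :: "(complex^'d^'d) measure \<Rightarrow> (complex^'d^'d) measure \<Rightarrow> (complex^'d^'d \<Rightarrow> complex) \<Rightarrow> bool" where
  "good \<mu>1 \<mu>2 g \<longleftrightarrow> integrable \<mu>1 g \<and> integrable \<mu>2 g \<and> (\<integral>V. g V \<partial>\<mu>1) = (\<integral>V. g V \<partial>\<mu>2)"

lemma polyk_design:
  fixes H \<nu> :: "(complex^'d^'d) measure" and z0 :: "complex^'d"
  assumes des: "unitary_design 4 H \<nu>" and haar: "is_haar H"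
  assumes "polyk k f" "k \<le> 4"
  shows "good \<nu> H (\<lambda>V. f (V *v z0))"
  using assms(3,4)
proof (induction rule: polyk.induct)
  case (pk_monom k i j)
  have pn: "prob_space \<nu>" "sets \<nu> = sets borel" "AE V in \<nu>. is_unitary V"
    using des AE_unit[of \<nu>] by (auto simp: unitary_design_def)
  have ph: "prob_space H" "sets H = sets borel" "AE V in H. is_unitary V"
    using haar AE_unit[of H] by (auto simp: is_haar_def)
  let ?I = "restrict i {..<k}" and ?J = "restrict j {..<k}"
  let ?Op = "\<lambda>a b. (\<Prod>l<k. z0 $ a l) * (\<Prod>l<k. cnj (z0 $ b l))"
  have eq: "\<And>V. monom k i j (V *v z0) = tconj k V ?Op ?I ?J"
    by (subst monom_restrict) (simp add: tconj_mono restrict_tuples)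
  have "(\<integral>V. tconj k V ?Op ?I ?J \<partial>\<nu>) = (\<integral>U. tconj k U ?Op ?I ?J \<partial>H)"
    using des pk_monom unfolding unitary_design_def by (simp add: restrict_tuples)
  thus ?case unfolding good_def eq[symmetric]
    using integrable_monom[OF pn] integrable_monom[OF ph] by simp
next
  case (pk_zero k)
  then show ?case by (simp add: good_def)
next
  case (pk_add k f g)
  then show ?case by (auto simp: good_def)
next
  case (pk_cmult k f c)
  then show ?case by (auto simp: good_def)
qed

lemma cnj_ind: "cnj (if P then 1 else 0) = (if P then 1 else 0)"
  by simp

lemma ind_l: "(if k = i then 1 else 0) * (x::complex) = (if k = i then x else 0)" by simp
lemma ind_r: "(x::complex) * (if k = i then 1 else 0) = (if k = i then x else 0)" by simp
lemma delta_sum_r: "(\<Sum>l\<in>UNIV. g l * (if l = i then 1 else 0)) = (g (i::'a::finite) :: complex)"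
  by (simp add: if_distrib cong: if_cong)

lemma trace_sesq_identity:
  fixes A :: "complex^'d^'d" and \<psi> :: "complex^'d"
  assumes n: "(\<Sum>k\<in>UNIV. cnj (\<psi> $ k) * \<psi> $ k) = 1"
  shows "trace A - sesq \<psi> A \<psi> =
     (\<Sum>i\<in>UNIV. sesq (\<chi> k. (if k = i then 1 else 0) - \<psi> $ k * cnj (\<psi> $ i)) A (\<chi> k. (if k = i then 1 else 0) - \<psi> $ k * cnj (\<psi> $ i)))"
proof -
  let ?s = "sesq \<psi> A \<psi>"
  have s: "?s = (\<Sum>k\<in>UNIV. \<Sum>l\<in>UNIV. cnj (\<psi> $ k) * A $ k $ l * \<psi> $ l)"
    by (simp add: sesq_def matrix_vector_mult_def sum_distrib_left mult.assoc)
  have "(\<Sum>i\<in>UNIV. sesq (\<chi> k. (if k = i then 1 else 0) - \<psi> $ k * cnj (\<psi> $ i)) A (\<chi> k. (if k = i then 1 else 0) - \<psi> $ k * cnj (\<psi> $ i)))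
     = (\<Sum>i\<in>UNIV. \<Sum>k\<in>UNIV. \<Sum>l\<in>UNIV.
          ((if k = i then 1 else 0) * A $ k $ l * (if l = i then 1 else 0)
          - (if k = i then 1 else 0) * A $ k $ l * (\<psi> $ l * cnj (\<psi> $ i))
          - cnj (\<psi> $ k) * \<psi> $ i * A $ k $ l * (if l = i then 1 else 0)
          + (\<psi> $ i * cnj (\<psi> $ i)) * (cnj (\<psi> $ k) * A $ k $ l * \<psi> $ l)))"
    by (simp add: sesq_def matrix_vector_mult_def sum_distrib_left algebra_simps cnj_ind)
  also have "\<dots> = (\<Sum>i\<in>UNIV. \<Sum>k\<in>UNIV. \<Sum>l\<in>UNIV. (if k = i then 1 else 0) * A $ k $ l * (if l = i then 1 else 0))
         - (\<Sum>i\<in>UNIV. \<Sum>k\<in>UNIV. \<Sum>l\<in>UNIV. (if k = i then 1 else 0) * A $ k $ l * (\<psi> $ l * cnj (\<psi> $ i)))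
         - (\<Sum>i\<in>UNIV. \<Sum>k\<in>UNIV. \<Sum>l\<in>UNIV. cnj (\<psi> $ k) * \<psi> $ i * A $ k $ l * (if l = i then 1 else 0))
         + (\<Sum>i\<in>UNIV. \<Sum>k\<in>UNIV. \<Sum>l\<in>UNIV. (\<psi> $ i * cnj (\<psi> $ i)) * (cnj (\<psi> $ k) * A $ k $ l * \<psi> $ l))"
    by (simp add: sum.distrib sum_subtractf)
  also have "(\<Sum>i\<in>UNIV. \<Sum>k\<in>UNIV. \<Sum>l\<in>UNIV. (if k = i then 1 else 0) * A $ k $ l * (if l = i then 1 else 0)) = trace A"
    by (simp add: trace_def ind_l ind_r sum.swap[of _ UNIV UNIV] cong: if_cong)
  also have "(\<Sum>i\<in>UNIV. \<Sum>k\<in>UNIV. \<Sum>l\<in>UNIV. (if k = i then 1 else 0) * A $ k $ l * (\<psi> $ l * cnj (\<psi> $ i))) = ?s"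
  proof -
    have "(\<Sum>i\<in>UNIV. \<Sum>k\<in>UNIV. \<Sum>l\<in>UNIV. (if k = i then 1 else 0) * A $ k $ l * (\<psi> $ l * cnj (\<psi> $ i)))
      = (\<Sum>i\<in>UNIV. \<Sum>k\<in>UNIV. (\<Sum>l\<in>UNIV. A $ k $ l * (\<psi> $ l * cnj (\<psi> $ i))) * (if k = i then 1 else 0))"
      by (simp add: sum_distrib_right sum_distrib_left ac_simps)
    also have "\<dots> = (\<Sum>i\<in>UNIV. \<Sum>l\<in>UNIV. A $ i $ l * (\<psi> $ l * cnj (\<psi> $ i)))"
      by (simp only: delta_sum_r)
    finally show ?thesis unfolding s by (simp add: ac_simps)
  qed
  also have "(\<Sum>i\<in>UNIV. \<Sum>k\<in>UNIV. \<Sum>l\<in>UNIV. cnj (\<psi> $ k) * \<psi> $ i * A $ k $ l * (if l = i then 1 else 0)) = ?s"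
  proof -
    have "(\<Sum>i\<in>UNIV. \<Sum>k\<in>UNIV. \<Sum>l\<in>UNIV. cnj (\<psi> $ k) * \<psi> $ i * A $ k $ l * (if l = i then 1 else 0))
       = (\<Sum>i\<in>UNIV. \<Sum>k\<in>UNIV. cnj (\<psi> $ k) * \<psi> $ i * A $ k $ i)"
      by (simp only: delta_sum_r)
    also have "\<dots> = (\<Sum>k\<in>UNIV. \<Sum>i\<in>UNIV. cnj (\<psi> $ k) * \<psi> $ i * A $ k $ i)"
      by (rule sum.swap)
    finally show ?thesis unfolding s by (simp add: ac_simps)
  qed
  also have "(\<Sum>i\<in>UNIV. \<Sum>k\<in>UNIV. \<Sum>l\<in>UNIV. (\<psi> $ i * cnj (\<psi> $ i)) * (cnj (\<psi> $ k) * A $ k $ l * \<psi> $ l)) = ?s"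
    unfolding s sum_distrib_left[symmetric] sum_distrib_right[symmetric] using n by (simp add: mult.commute)
  finally show ?thesis by simp
qed


lemma sesq_ketbra: "sesq u (ketbra \<psi>) u = (\<Sum>k\<in>UNIV. cnj (u $ k) * \<psi> $ k) * cnj (\<Sum>k\<in>UNIV. cnj (u $ k) * \<psi> $ k)"
  by (simp add: sesq_def ketbra_def matrix_vector_mult_def sum_distrib_left sum_product ac_simps) (rule sum.swap)

lemma nonneg_c_cnj: "nonneg_c (s * cnj s)"
  by (simp add: nonneg_c_def complex_mult_cnj)

lemma psd_ketbra: "block_psd 1 (\<lambda>a b. ketbra \<psi>)"
  unfolding block_psd_def
proof
  fix w :: "nat \<Rightarrow> complex^'a"
  have "(\<Sum>a<1. \<Sum>b<1. sesq (w a) (ketbra \<psi>) (w b)) = sesq (w 0) (ketbra \<psi>) (w 0)" by simp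
  then show "nonneg_c (\<Sum>a<1. \<Sum>b<1. sesq (w a) (ketbra \<psi>) (w b))"
    unfolding sesq_ketbra by (simp only: nonneg_c_cnj)
qed

lemma channel_psd:
  assumes "quantum_channel E" shows "nonneg_c (sesq u (E (ketbra \<psi>)) u)"
proof -
  have "block_psd 1 (\<lambda>a b. E (ketbra \<psi>))"
    using assms psd_ketbra unfolding quantum_channel_def by blast
  then show ?thesis unfolding block_psd_def
    by (drule_tac x="\<lambda>_. u" in spec) simp
qed

lemma trace_ketbra: "trace (ketbra \<psi>) = (\<Sum>k\<in>UNIV. cnj (\<psi> $ k) * \<psi> $ k)"
  by (simp add: trace_def ketbra_def mult.commute)

lemma fid_bounds:
  assumes qc: "quantum_channel E" and n: "(\<Sum>k\<in>UNIV. cnj (\<psi> $ k) * \<psi> $ k) = 1"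
  shows "0 \<le> fid E \<psi> \<and> fid E \<psi> \<le> 1"
proof
  show "0 \<le> fid E \<psi>" using channel_psd[OF qc, of \<psi> \<psi>] by (simp add: fid_def nonneg_c_def)
  let ?A = "E (ketbra \<psi>)"
  have tr: "trace ?A = 1" using qc n trace_ketbra unfolding quantum_channel_def by metis
  have "Re (trace ?A - sesq \<psi> ?A \<psi>) \<ge> 0"
    unfolding trace_sesq_identity[OF n] Re_sum
    by (intro sum_nonneg) (use channel_psd[OF qc] in \<open>simp add: nonneg_c_def\<close>)
  thus "fid E \<psi> \<le> 1" using tr by (simp add: fid_def)
qed

definition eb :: "'d \<Rightarrow> 'd \<Rightarrow> complex^'d^'d" where
  "eb a b = (\<chi> i j. if i = a \<and> j = b then 1 else 0)"

lemma E_zero: assumes "quantum_channel E" shows "E 0 = 0"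
proof -
  have "E (0 + 0) = E 0 + E 0" using assms unfolding quantum_channel_def by blast
  thus ?thesis by simp
qed

lemma E_sum: assumes "quantum_channel E" "finite S"
  shows "E (\<Sum>x\<in>S. f x) = (\<Sum>x\<in>S. E (f x))"
  using assms(2)
proof (induction S rule: finite_induct)
  case empty thus ?case using E_zero[OF assms(1)] by simp
next
  case (insert x F) thus ?case using assms(1) unfolding quantum_channel_def by simp
qed

lemma if_conj_zero: "(if P \<and> Q then a else 0) = (if P then (if Q then a else 0) else 0)"
  by simp

lemma sum_if_out: "(\<Sum>x\<in>S. if P then f x else 0) = (if P then (\<Sum>x\<in>S. f x) else 0)"
  by simp

lemma ketbra_expand: "ketbra \<psi> = (\<Sum>a\<in>UNIV. \<Sum>b\<in>UNIV. msmult (\<psi> $ a * cnj (\<psi> $ b)) (eb a b))"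
  by (simp add: vec_eq_iff ketbra_def sum_component msmult_def eb_def if_conj_zero sum_if_out if_distrib[where f="\<lambda>x. _ * x"] cong: if_cong)

lemma monom1: "monom 1 (\<lambda>_. a) (\<lambda>_. i) \<psi> = \<psi> $ a * cnj (\<psi> $ i)"
  by (simp add: monom_def)

definition zf :: "(complex^'d^'d \<Rightarrow> complex^'d^'d) \<Rightarrow> complex^'d \<Rightarrow> complex" where
  "zf E \<psi> = sesq \<psi> (E (ketbra \<psi>)) \<psi>"

lemma zf_expand: assumes "quantum_channel E"
  shows "zf E \<psi> = (\<Sum>i\<in>UNIV. \<Sum>j\<in>UNIV. \<Sum>a\<in>UNIV. \<Sum>b\<in>UNIV.
      E (eb a b) $ i $ j * (monom 1 (\<lambda>_. a) (\<lambda>_. i) \<psi> * monom 1 (\<lambda>_. j) (\<lambda>_. b) \<psi>))"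
proof -
  have hom: "\<And>c A. E (msmult c A) = msmult c (E A)" using assms unfolding quantum_channel_def by blast
  have "E (ketbra \<psi>) = (\<Sum>a\<in>UNIV. \<Sum>b\<in>UNIV. msmult (\<psi> $ a * cnj (\<psi> $ b)) (E (eb a b)))"
    unfolding ketbra_expand by (simp add: E_sum[OF assms] hom)
  then show ?thesis
    unfolding zf_def monom1
    by (simp add: sesq_def matrix_vector_mult_def sum_component msmult_def sum_distrib_left sum_distrib_right ac_simps)
qed

lemma polyk_zf: assumes "quantum_channel E" shows "polyk 2 (zf E)"
proof -
  have "polyk (1+1) (\<lambda>\<psi>. \<Sum>i\<in>UNIV. \<Sum>j\<in>UNIV. \<Sum>a\<in>UNIV. \<Sum>b\<in>UNIV.
      E (eb a b) $ i $ j * (monom 1 (\<lambda>_. a) (\<lambda>_. i) \<psi> * monom 1 (\<lambda>_. j) (\<lambda>_. b) \<psi>))"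
    by (intro pk_sum pk_cmult pk_mult pk_monom) simp_all
  moreover have "zf E = (\<lambda>\<psi>. \<Sum>i\<in>UNIV. \<Sum>j\<in>UNIV. \<Sum>a\<in>UNIV. \<Sum>b\<in>UNIV.
      E (eb a b) $ i $ j * (monom 1 (\<lambda>_. a) (\<lambda>_. i) \<psi> * monom 1 (\<lambda>_. j) (\<lambda>_. b) \<psi>))"
    by (rule ext) (rule zf_expand[OF assms])
  ultimately show ?thesis unfolding one_add_one by simp
qed

lemma pim_sums:
  fixes Q :: "'a measure" and g :: "'a \<Rightarrow> real" and I :: "'i set"
  assumes Q: "prob_space Q" and fin: "finite I" and gm[measurable]: "g \<in> borel_measurable Q"
    and gb: "\<And>x. x \<in> space Q \<Longrightarrow> \<bar>g x\<bar> \<le> B"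
  shows "integrable (PiM I (\<lambda>_. Q)) (\<lambda>x. \<Sum>i\<in>I. g (x i))"
    and "integrable (PiM I (\<lambda>_. Q)) (\<lambda>x. (\<Sum>i\<in>I. g (x i))\<^sup>2)"
    and "(\<integral>x. (\<Sum>i\<in>I. g (x i)) \<partial>PiM I (\<lambda>_. Q)) = real (card I) * (\<integral>y. g y \<partial>Q)"
    and "(\<integral>x. (\<Sum>i\<in>I. g (x i))\<^sup>2 \<partial>PiM I (\<lambda>_. Q)) =
           real (card I) * (\<integral>y. (g y)\<^sup>2 \<partial>Q) + real (card I) * (real (card I) - 1) * (\<integral>y. g y \<partial>Q)\<^sup>2"
proof -
  interpret Qp: prob_space Q by fact
  interpret product_prob_space "\<lambda>_. Q" I
    by unfold_locales
  let ?P = "PiM I (\<lambda>_. Q)"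
  have B0: "0 \<le> B" using gb[OF Qp.not_empty[THEN some_in_eq[THEN iffD2]]] by linarith
  have gbound: "\<And>i x. x \<in> space ?P \<Longrightarrow> i \<in> I \<Longrightarrow> \<bar>g (x i)\<bar> \<le> B"
    using gb by (auto simp: space_PiM)
  have mi[measurable]: "\<And>i. i \<in> I \<Longrightarrow> (\<lambda>x. g (x i)) \<in> borel_measurable ?P"
    by measurable
  have int1: "\<And>i. i \<in> I \<Longrightarrow> integrable ?P (\<lambda>x. g (x i))"
    by (rule P.integrable_const_bound[where B=B]) (auto intro!: AE_I2 gbound)
  have int2: "\<And>i j. i \<in> I \<Longrightarrow> j \<in> I \<Longrightarrow> integrable ?P (\<lambda>x. g (x i) * g (x j))"
    by (rule P.integrable_const_bound[where B="B*B"])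
       (auto intro!: AE_I2 simp: abs_mult intro!: mult_mono gbound B0)
  have intQ: "integrable Q g"
    by (rule Qp.integrable_const_bound[where B=B]) (auto intro!: AE_I2 gb)
  have intQ2: "integrable Q (\<lambda>y. g y * g y)"
  proof (rule Qp.integrable_const_bound[where B="B*B"])
    have "\<And>x. x\<in>space Q \<Longrightarrow> norm (g x * g x) \<le> B*B"
      using gb B0 by (metis abs_ge_zero abs_mult mult_mono real_norm_def)
    then show "AE x in Q. norm (g x * g x) \<le> B * B" by (auto intro!: AE_I2)
  qed simp
  have one: "\<And>i (h::'a \<Rightarrow> real). i \<in> I \<Longrightarrow> integrable Q h \<Longrightarrow> (\<integral>x. h (x i) \<partial>?P) = (\<integral>y. h y \<partial>Q)"
  proof -
    fix i and h :: "'a \<Rightarrow> real" assume i: "i \<in> I" and h: "integrable Q h"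
    have pw: "(\<Prod>l\<in>I. (if l = i then h else (\<lambda>_. 1)) (x l)) = h (x i)" for x
      using fin i by (simp add: if_distrib[where f="\<lambda>f. f (x _)"] prod.delta cong: if_cong)
    have "(\<integral>x. h (x i) \<partial>?P) = (\<integral>x. (\<Prod>l\<in>I. (if l = i then h else (\<lambda>_. 1)) (x l)) \<partial>?P)"
      by (simp only: pw)
    also have "\<dots> = (\<Prod>l\<in>I. \<integral>y. (if l = i then h else (\<lambda>_. 1)) y \<partial>Q)"
      by (rule product_integral_prod[OF fin]) (auto simp: h)
    also have "\<dots> = (\<Prod>l\<in>I. if l = i then (\<integral>y. h y \<partial>Q) else 1)"
      by (intro prod.cong refl) (auto simp: Qp.prob_space)
    also have "\<dots> = (\<integral>y. h y \<partial>Q)" using fin i by (simp add: prod.delta)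
    finally show "(\<integral>x. h (x i) \<partial>?P) = (\<integral>y. h y \<partial>Q)" .
  qed
  have two: "\<And>i j. i \<in> I \<Longrightarrow> j \<in> I \<Longrightarrow> i \<noteq> j \<Longrightarrow> (\<integral>x. g (x i) * g (x j) \<partial>?P) = (\<integral>y. g y \<partial>Q) * (\<integral>y. g y \<partial>Q)"
  proof -
    fix i j assume i: "i \<in> I" and j: "j \<in> I" and ij: "i \<noteq> j"
    let ?f = "\<lambda>l. if l = i \<or> l = j then g else (\<lambda>_. 1)"
    have ijs: "I \<inter> {x. x \<in> {i, j}} = {i,j}" "I \<inter> {x. x = i \<or> x = j} = {i,j}" using i j by auto
    have pw: "(\<Prod>l\<in>I. ?f l (x l)) = g (x i) * g (x j)" for x
    proof -
      have "(\<Prod>l\<in>I. ?f l (x l)) = (\<Prod>l\<in>I. if l \<in> {i, j} then g (x l) else 1)"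
        by (intro prod.cong refl) auto
      also have "\<dots> = (\<Prod>l\<in>{i,j}. g (x l))"
        using fin i j by (subst prod.If_cases) (auto simp: ijs)
      finally show ?thesis using ij by simp
    qed
    have "(\<integral>x. g (x i) * g (x j) \<partial>?P) = (\<integral>x. (\<Prod>l\<in>I. ?f l (x l)) \<partial>?P)"
      by (simp only: pw)
    also have "\<dots> = (\<Prod>l\<in>I. \<integral>y. ?f l y \<partial>Q)"
      by (rule product_integral_prod[OF fin]) (auto simp: intQ)
    also have "\<dots> = (\<Prod>l\<in>I. if l \<in> {i, j} then (\<integral>y. g y \<partial>Q) else 1)"
      by (intro prod.cong refl) (auto simp: Qp.prob_space)
    also have "\<dots> = (\<Prod>l\<in>{i,j}. (\<integral>y. g y \<partial>Q))"
      using fin i j by (subst prod.If_cases) (auto simp: ijs)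
    also have "\<dots> = (\<integral>y. g y \<partial>Q) * (\<integral>y. g y \<partial>Q)" using ij by simp
    finally show "(\<integral>x. g (x i) * g (x j) \<partial>?P) = (\<integral>y. g y \<partial>Q) * (\<integral>y. g y \<partial>Q)" .
  qed
  show "integrable ?P (\<lambda>x. \<Sum>i\<in>I. g (x i))" using int1 by auto
  have sq: "(\<lambda>x. (\<Sum>i\<in>I. g (x i))\<^sup>2) = (\<lambda>x. \<Sum>i\<in>I. \<Sum>j\<in>I. g (x i) * g (x j))"
    by (simp add: power2_eq_square sum_product)
  show "integrable ?P (\<lambda>x. (\<Sum>i\<in>I. g (x i))\<^sup>2)" unfolding sq using int2 by auto
  show "(\<integral>x. (\<Sum>i\<in>I. g (x i)) \<partial>?P) = real (card I) * (\<integral>y. g y \<partial>Q)"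
    using int1 by (simp add: integral_sum one intQ)
  have "(\<integral>x. (\<Sum>i\<in>I. g (x i))\<^sup>2 \<partial>?P) = (\<Sum>i\<in>I. \<Sum>j\<in>I. \<integral>x. g (x i) * g (x j) \<partial>?P)"
    unfolding sq using int2 by (simp add: integral_sum)
  also have "\<dots> = (\<Sum>i\<in>I. (\<integral>y. g y * g y \<partial>Q) + real (card I - 1) * ((\<integral>y. g y \<partial>Q) * (\<integral>y. g y \<partial>Q)))"
  proof (intro sum.cong refl)
    fix i assume i: "i \<in> I"
    have "(\<Sum>j\<in>I. \<integral>x. g (x i) * g (x j) \<partial>?P) = (\<integral>x. g (x i) * g (x i) \<partial>?P) + (\<Sum>j\<in>I-{i}. \<integral>x. g (x i) * g (x j) \<partial>?P)"
      using fin i by (simp add: sum.remove)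
    also have "(\<integral>x. g (x i) * g (x i) \<partial>?P) = (\<integral>y. g y * g y \<partial>Q)"
      using one[OF i intQ2] by simp
    also have "(\<Sum>j\<in>I-{i}. \<integral>x. g (x i) * g (x j) \<partial>?P) = (\<Sum>j\<in>I-{i}. (\<integral>y. g y \<partial>Q) * (\<integral>y. g y \<partial>Q))"
      using i by (intro sum.cong refl two) auto
    also have "\<dots> = real (card I - 1) * ((\<integral>y. g y \<partial>Q) * (\<integral>y. g y \<partial>Q))"
      using fin i by simp
    finally show "(\<Sum>j\<in>I. \<integral>x. g (x i) * g (x j) \<partial>?P) = (\<integral>y. g y * g y \<partial>Q) + real (card I - 1) * ((\<integral>y. g y \<partial>Q) * (\<integral>y. g y \<partial>Q))" .
  qed
  also have "\<dots> = real (card I) * (\<integral>y. (g y)\<^sup>2 \<partial>Q) + real (card I) * (real (card I) - 1) * (\<integral>y. g y \<partial>Q)\<^sup>2"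
  proof (cases "I = {}")
    case True then show ?thesis by simp
  next
    case False
    then have "card I \<ge> 1" using fin by (simp add: Suc_leI card_gt_0_iff)
    then show ?thesis by (simp add: of_nat_diff power2_eq_square algebra_simps)
  qed
  finally show "(\<integral>x. (\<Sum>i\<in>I. g (x i))\<^sup>2 \<partial>?P) =
           real (card I) * (\<integral>y. (g y)\<^sup>2 \<partial>Q) + real (card I) * (real (card I) - 1) * (\<integral>y. g y \<partial>Q)\<^sup>2" .
qed

lemma pmf_bern_gen: "pmf (bernoulli_pmf q) b = (if b then min 1 (max 0 q) else 1 - min 1 (max 0 q))"
  by (simp add: bernoulli_pmf.rep_eq)

lemma cont_monom_psi: "continuous_on UNIV (\<lambda>\<psi>::complex^'d. monom k i j \<psi>)"
  unfolding monom_def by (intro continuous_intros)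

lemma fid_zf: "fid E \<psi> = Re (zf E \<psi>)"
  by (simp add: fid_def zf_def)

lemma meas_fid:
  assumes "quantum_channel E"
  shows "fid E \<in> borel_measurable borel"
proof -
  have "fid E = (\<lambda>\<psi>. Re (\<Sum>i\<in>UNIV. \<Sum>j\<in>UNIV. \<Sum>a\<in>UNIV. \<Sum>b\<in>UNIV.
      E (eb a b) $ i $ j * (monom 1 (\<lambda>_. a) (\<lambda>_. i) \<psi> * monom 1 (\<lambda>_. j) (\<lambda>_. b) \<psi>)))"
    by (rule ext) (simp only: fid_zf zf_expand[OF assms])
  also have "\<dots> \<in> borel_measurable borel"
    by (intro borel_measurable_continuous_onI continuous_intros cont_monom_psi[THEN continuous_on_subset]) auto
  finally show ?thesis .
qed

lemma meas_mv: "(\<lambda>V::complex^'d^'d. V *v z) \<in> borel_measurable borel"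
  unfolding matrix_vector_mult_def by (intro borel_measurable_continuous_onI continuous_intros)


definition Rk :: "(complex^'d^'d \<Rightarrow> complex^'d^'d) \<Rightarrow> complex^'d \<Rightarrow> nat \<Rightarrow> complex^'d^'d \<Rightarrow> (nat \<Rightarrow> bool) measure" where
  "Rk E z0 N V = (\<Pi>\<^sub>M s\<in>{..<N}. measure_pmf (bernoulli_pmf (fid E (V *v z0))))"

lemma sets_Rk: "sets (Rk E z0 N V) = sets (\<Pi>\<^sub>M s\<in>{..<N}. count_space UNIV)"
  unfolding Rk_def by (intro sets_PiM_cong refl) simp

lemma space_Rk: "space (Rk E z0 N V) = space (\<Pi>\<^sub>M s\<in>{..<N}. count_space UNIV)"
  by (rule sets_eq_imp_space_eq[OF sets_Rk])

lemma prob_Rk: "prob_space (Rk E z0 N V)"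
  unfolding Rk_def by (intro prob_space_PiM prob_space_measure_pmf)

lemma psf_pmf: "product_sigma_finite (\<lambda>_. measure_pmf p)"
  unfolding product_sigma_finite_def
  using subprob_space_imp_sigma_finite[OF prob_space_imp_subprob_space[OF prob_space_measure_pmf]] by blast

lemma meas_pf:
  fixes E :: "complex^'d^'d \<Rightarrow> complex^'d^'d" and z0 :: "complex^'d" and \<mu> :: "(complex^'d^'d) measure"
  assumes "quantum_channel E" "sets \<mu> = sets borel"
  shows "(\<lambda>V. fid E (V *v z0)) \<in> borel_measurable \<mu>"
proof -
  have "(\<lambda>V. fid E (V *v z0)) \<in> borel_measurable borel"
    by (rule measurable_compose[OF meas_mv meas_fid[OF assms(1)]])
  thus ?thesis using measurable_cong_sets[OF assms(2) refl] by blast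
qed

lemma emeasure_Rk:
  assumes "A \<in> sets (\<Pi>\<^sub>M s\<in>{..<N}. count_space UNIV)"
  shows "emeasure (Rk E z0 N V) A = (\<Sum>X\<in>A. \<Prod>s<N. ennreal (pmf (bernoulli_pmf (fid E (V *v z0))) (X s)))"
proof -
  let ?S = "space (\<Pi>\<^sub>M s\<in>{..<N}. count_space (UNIV::bool set))"
  have AS: "A \<subseteq> ?S" using sets.sets_into_space[OF assms] .
  have Sfin: "finite ?S" by (simp add: space_PiM finite_PiE)
  have Afin: "finite A" using finite_subset[OF AS Sfin] .
  have sing: "\<And>X. X \<in> A \<Longrightarrow> {X} = (\<Pi>\<^sub>E s\<in>{..<N}. {X s})"
    using AS by (auto simp: space_PiM PiE_iff extensional_def fun_eq_iff)
  interpret psf: product_sigma_finite "\<lambda>_. measure_pmf (bernoulli_pmf (fid E (V *v z0)))" by (rule psf_pmf)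
  have "emeasure (Rk E z0 N V) A = (\<Sum>X\<in>A. emeasure (Rk E z0 N V) {X})"
  proof (rule emeasure_eq_sum_singleton[OF Afin])
    fix X assume "X \<in> A"
    then show "{X} \<in> sets (Rk E z0 N V)" unfolding sing[OF \<open>X \<in> A\<close>] Rk_def
      by (intro sets_PiM_I_finite) auto
  qed
  also have "\<dots> = (\<Sum>X\<in>A. \<Prod>s<N. ennreal (pmf (bernoulli_pmf (fid E (V *v z0))) (X s)))"
  proof (intro sum.cong refl)
    fix X assume "X \<in> A"
    show "emeasure (Rk E z0 N V) {X} = (\<Prod>s<N. ennreal (pmf (bernoulli_pmf (fid E (V *v z0))) (X s)))"
      unfolding sing[OF \<open>X \<in> A\<close>] Rk_def
      by (subst psf.emeasure_PiM) (auto simp: emeasure_pmf_single)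
  qed
  finally show ?thesis .
qed

lemma meas_Rk:
  assumes qc: "quantum_channel E" and sb: "sets \<mu> = sets borel"
  shows "Rk E z0 N \<in> measurable \<mu> (subprob_algebra (\<Pi>\<^sub>M s\<in>{..<N}. count_space UNIV))"
proof (rule measurable_subprob_algebra)
  fix V show "subprob_space (Rk E z0 N V)" by (rule prob_space_imp_subprob_space[OF prob_Rk])
  show "sets (Rk E z0 N V) = sets (\<Pi>\<^sub>M s\<in>{..<N}. count_space UNIV)" by (rule sets_Rk)
next
  fix A assume A: "A \<in> sets (\<Pi>\<^sub>M s\<in>{..<N}. count_space (UNIV::bool set))"
  have [measurable]: "(\<lambda>V. fid E (V *v z0)) \<in> borel_measurable \<mu>" by (rule meas_pf[OF qc sb])
  show "(\<lambda>V. emeasure (Rk E z0 N V) A) \<in> borel_measurable \<mu>"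
    unfolding emeasure_Rk[OF A] pmf_bern_gen by measurable
qed

lemma integral_bind_closed:
  fixes h :: "'b \<Rightarrow> real"
  assumes Mp: "prob_space M"
    and K: "K \<in> measurable M (subprob_algebra B)"
    and pK: "\<And>x. x \<in> space M \<Longrightarrow> prob_space (K x)"
    and hm[measurable]: "h \<in> borel_measurable B"
    and h0: "\<And>y. 0 \<le> h y" and hb: "\<And>y. h y \<le> C"
    and G: "\<And>x. x \<in> space M \<Longrightarrow> (\<integral>y. h y \<partial>K x) = G x"
    and Gm[measurable]: "G \<in> borel_measurable M"
  shows "(\<integral>y. h y \<partial>(M \<bind> K)) = (\<integral>x. G x \<partial>M)"
proof -
  interpret Mp: prob_space M by fact
  have ne: "space M \<noteq> {}" by (rule Mp.not_empty)
  have sK: "\<And>x. x \<in> space M \<Longrightarrow> sets (K x) = sets B" using sets_kernel[OF K] .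
  have sb: "sets (M \<bind> K) = sets B" by (rule sets_bind_measurable[OF K ne])
  have hm': "h \<in> borel_measurable (M \<bind> K)" using measurable_cong_sets[OF sb refl] hm by blast
  have G0: "\<And>x. x \<in> space M \<Longrightarrow> 0 \<le> G x"
  proof -
    fix x assume "x \<in> space M"
    have "0 \<le> (\<integral>y. h y \<partial>K x)" by (rule Bochner_Integration.integral_nonneg) (simp add: h0)
    with G[OF \<open>x \<in> space M\<close>] show "0 \<le> G x" by simp
  qed
  have inner: "\<And>x. x \<in> space M \<Longrightarrow> (\<integral>\<^sup>+y. ennreal (h y) \<partial>K x) = ennreal (G x)"
  proof -
    fix x assume x: "x \<in> space M"
    interpret Kp: prob_space "K x" using pK[OF x] .
    have hmx: "h \<in> borel_measurable (K x)" using measurable_cong_sets[OF sK[OF x] refl] hm by blast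
    have "integrable (K x) h"
      by (rule Kp.integrable_const_bound[where B=C]) (use h0 hb hmx in auto)
    then have "(\<integral>\<^sup>+y. ennreal (h y) \<partial>K x) = ennreal (\<integral>y. h y \<partial>K x)"
      by (intro nn_integral_eq_integral) (auto simp: h0)
    then show "(\<integral>\<^sup>+y. ennreal (h y) \<partial>K x) = ennreal (G x)" using G[OF x] by simp
  qed
  have "(\<integral>y. h y \<partial>(M \<bind> K)) = enn2real (\<integral>\<^sup>+y. ennreal (h y) \<partial>(M \<bind> K))"
    by (rule integral_eq_nn_integral) (auto simp: h0 hm')
  also have "(\<integral>\<^sup>+y. ennreal (h y) \<partial>(M \<bind> K)) = (\<integral>\<^sup>+x. \<integral>\<^sup>+y. ennreal (h y) \<partial>K x \<partial>M)"
    by (rule nn_integral_bind[OF _ K]) measurable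
  also have "\<dots> = (\<integral>\<^sup>+x. ennreal (G x) \<partial>M)"
    by (rule nn_integral_cong) (simp add: inner)
  also have "enn2real \<dots> = (\<integral>x. G x \<partial>M)"
    by (rule integral_eq_nn_integral[symmetric]) (auto intro!: AE_I2 G0)
  finally show ?thesis .
qed

definition Kk :: "(complex^'d^'d \<Rightarrow> complex^'d^'d) \<Rightarrow> complex^'d \<Rightarrow> nat \<Rightarrow> complex^'d^'d \<Rightarrow> ((complex^'d^'d) \<times> (nat \<Rightarrow> bool)) measure" where
  "Kk E z0 N V = distr (Rk E z0 N V) (block_space N) (\<lambda>X. (V, X))"

definition Yf :: "nat \<Rightarrow> (complex^'d^'d) \<times> (nat \<Rightarrow> bool) \<Rightarrow> real" where
  "Yf N \<omega> = (\<Sum>s<N. of_bool (snd \<omega> s))"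

lemma block_law_Kk: "block_law E z0 N \<nu> = \<nu> \<bind> Kk E z0 N"
  unfolding block_law_def Kk_def Rk_def ..

lemma meas_Pair_V: "(\<lambda>X. (V, X)) \<in> measurable (Rk E z0 N V) (block_space N)"
  unfolding block_space_def
  by (rule measurable_Pair[OF measurable_const measurable_ident_sets[OF sets_Rk]]) simp

lemma meas_Kk:
  fixes E :: "complex^'d^'d \<Rightarrow> complex^'d^'d" and z0 :: "complex^'d" and \<nu> :: "(complex^'d^'d) measure"
  assumes qc: "quantum_channel E" and sb: "sets \<nu> = sets borel"
  shows "Kk E z0 N \<in> measurable \<nu> (subprob_algebra (block_space N))"
  unfolding Kk_def
proof (rule measurable_distr2[where f="\<lambda>V X. (V, X)" and M="\<Pi>\<^sub>M s\<in>{..<N}. count_space UNIV"])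
  show "Rk E z0 N \<in> measurable \<nu> (subprob_algebra (\<Pi>\<^sub>M s\<in>{..<N}. count_space UNIV))"
    by (rule meas_Rk[OF qc sb])
  have "(\<lambda>x. x) \<in> measurable (\<nu> \<Otimes>\<^sub>M (\<Pi>\<^sub>M s\<in>{..<N}. count_space UNIV)) (block_space N)"
    unfolding block_space_def by (rule measurable_ident_sets) (rule sets_pair_measure_cong[OF sb refl])
  then show "(\<lambda>(V, X). (V, X)) \<in> measurable (\<nu> \<Otimes>\<^sub>M (\<Pi>\<^sub>M s\<in>{..<N}. count_space UNIV)) (block_space N)"
    by (simp add: case_prod_Pair_iden)
qed

lemma prob_Kk: "prob_space (Kk E z0 N V)"
  unfolding Kk_def by (rule prob_space.prob_space_distr[OF prob_Rk meas_Pair_V])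

lemma meas_Yf[measurable]: "Yf N \<in> borel_measurable (block_space N)"
  unfolding Yf_def block_space_def by measurable

lemma Yf_bounds: "0 \<le> Yf N \<omega>" "Yf N \<omega> \<le> real N"
proof -
  show "0 \<le> Yf N \<omega>" unfolding Yf_def by (simp add: sum_nonneg)
  have "Yf N \<omega> \<le> (\<Sum>s<N. 1)" unfolding Yf_def by (intro sum_mono) simp
  then show "Yf N \<omega> \<le> real N" by simp
qed

lemma int_of_bool_pmf: "(\<integral>b. (of_bool b :: real) \<partial>measure_pmf r) = pmf r True"
  by (subst integral_measure_pmf[of UNIV]) (auto simp: UNIV_bool)

lemma ofb_sq: "(\<lambda>b. (of_bool b :: real)\<^sup>2) = of_bool"
  by (rule ext) simp

lemma int_Kk:
  fixes E :: "complex^'d^'d \<Rightarrow> complex^'d^'d" and z0 :: "complex^'d" and V :: "complex^'d^'d" and N :: nat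
  defines "p \<equiv> pmf (bernoulli_pmf (fid E (V *v z0))) True"
  shows "(\<integral>\<omega>. Yf N \<omega> \<partial>Kk E z0 N V) = real N * p"
    and "(\<integral>\<omega>. (Yf N \<omega>)\<^sup>2 \<partial>Kk E z0 N V) = real N * p + real N * (real N - 1) * p\<^sup>2"
proof -
  let ?B = "measure_pmf (bernoulli_pmf (fid E (V *v z0)))"
  have ps: "prob_space ?B" by (rule prob_space_measure_pmf)
  have gm: "(\<lambda>b. of_bool b :: real) \<in> borel_measurable ?B" by simp
  have gb: "\<And>b. b \<in> space ?B \<Longrightarrow> \<bar>of_bool b :: real\<bar> \<le> 1" by simp
  note S = pim_sums[OF ps finite_lessThan[of N] gm gb]
  have e1: "\<And>f::_ \<Rightarrow> real. f \<in> borel_measurable (block_space N) \<Longrightarrow> (\<integral>\<omega>. f \<omega> \<partial>Kk E z0 N V) = (\<integral>X. f (V, X) \<partial>Rk E z0 N V)"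
    unfolding Kk_def using meas_Pair_V[of V E z0 N] by (simp add: integral_distr)
  have sq: "(\<integral>b. (of_bool b :: real)\<^sup>2 \<partial>?B) = p"
    unfolding p_def ofb_sq by (rule int_of_bool_pmf)
  have "(\<integral>\<omega>. Yf N \<omega> \<partial>Kk E z0 N V) = (\<integral>X. Yf N (V, X) \<partial>Rk E z0 N V)" by (rule e1[OF meas_Yf])
  also have "\<dots> = (\<integral>X. (\<Sum>s\<in>{..<N}. of_bool (X s)) \<partial>PiM {..<N} (\<lambda>_. ?B))" by (simp only: Yf_def snd_conv Rk_def)
  also have "\<dots> = real N * p" by (simp only: S(3) card_lessThan int_of_bool_pmf p_def)
  finally show "(\<integral>\<omega>. Yf N \<omega> \<partial>Kk E z0 N V) = real N * p" .
  have [measurable]: "(\<lambda>\<omega>. (Yf N \<omega>)\<^sup>2) \<in> borel_measurable (block_space N)" by measurable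
  have "(\<integral>\<omega>. (Yf N \<omega>)\<^sup>2 \<partial>Kk E z0 N V) = (\<integral>X. (Yf N (V, X))\<^sup>2 \<partial>Rk E z0 N V)" by (rule e1) measurable
  also have "\<dots> = (\<integral>X. (\<Sum>s\<in>{..<N}. of_bool (X s))\<^sup>2 \<partial>PiM {..<N} (\<lambda>_. ?B))" by (simp only: Yf_def snd_conv Rk_def)
  also have "\<dots> = real N * p + real N * (real N - 1) * p\<^sup>2" by (simp only: S(4) card_lessThan int_of_bool_pmf p_def sq[unfolded p_def])
  finally show "(\<integral>\<omega>. (Yf N \<omega>)\<^sup>2 \<partial>Kk E z0 N V) = real N * p + real N * (real N - 1) * p\<^sup>2" .
qed

lemma norm_sq_sum: "(\<Sum>k\<in>UNIV. cnj (z $ k) * z $ k) = complex_of_real ((norm z)\<^sup>2)"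
proof -
  have "(norm z)\<^sup>2 = (\<Sum>k\<in>UNIV. (cmod (z $ k))\<^sup>2)"
    unfolding norm_vec_def L2_set_def by (simp add: sum_nonneg)
  moreover have "\<And>w. cnj w * w = complex_of_real ((cmod w)\<^sup>2)"
    by (simp only: complex_norm_square mult.commute)
  ultimately show ?thesis by simp
qed

lemma unitary_norm:
  fixes V :: "complex^'d^'d"
  assumes "is_unitary V"
  shows "(\<Sum>k\<in>UNIV. cnj ((V *v z) $ k) * (V *v z) $ k) = (\<Sum>k\<in>UNIV. cnj (z $ k) * z $ k)"
proof -
  have id: "\<And>c c'. (\<Sum>k\<in>UNIV. cnj (V $ k $ c) * V $ k $ c') = (if c' = c then 1 else 0)"
  proof -
    fix c c'
    have "(adj V ** V) $ c $ c' = mat 1 $ c $ c'" using assms unfolding is_unitary_def by simp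
    thus "(\<Sum>k\<in>UNIV. cnj (V $ k $ c) * V $ k $ c') = (if c' = c then 1 else 0)"
      by (auto simp: matrix_matrix_mult_def adj_def mat_def)
  qed
  have "(\<Sum>k\<in>UNIV. cnj ((V *v z) $ k) * (V *v z) $ k)
      = (\<Sum>k\<in>UNIV. \<Sum>c\<in>UNIV. \<Sum>c'\<in>UNIV. cnj (z $ c) * z $ c' * (cnj (V $ k $ c) * V $ k $ c'))"
    unfolding matrix_vector_mult_def vec_lambda_beta cnj_sum sum_product
    by (intro sum.cong refl) (simp add: ac_simps)
  also have "\<dots> = (\<Sum>c\<in>UNIV. \<Sum>c'\<in>UNIV. cnj (z $ c) * z $ c' * (\<Sum>k\<in>UNIV. cnj (V $ k $ c) * V $ k $ c'))"
  proof -
    have "(\<Sum>k\<in>UNIV. \<Sum>c\<in>UNIV. \<Sum>c'\<in>UNIV. cnj (z $ c) * z $ c' * (cnj (V $ k $ c) * V $ k $ c'))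
       = (\<Sum>c\<in>UNIV. \<Sum>k\<in>UNIV. \<Sum>c'\<in>UNIV. cnj (z $ c) * z $ c' * (cnj (V $ k $ c) * V $ k $ c'))"
      by (rule sum.swap)
    also have "\<dots> = (\<Sum>c\<in>UNIV. \<Sum>c'\<in>UNIV. \<Sum>k\<in>UNIV. cnj (z $ c) * z $ c' * (cnj (V $ k $ c) * V $ k $ c'))"
      by (intro sum.cong refl sum.swap)
    also have "\<dots> = (\<Sum>c\<in>UNIV. \<Sum>c'\<in>UNIV. cnj (z $ c) * z $ c' * (\<Sum>k\<in>UNIV. cnj (V $ k $ c) * V $ k $ c'))"
      by (simp only: sum_distrib_left)
    finally show ?thesis .
  qed
  also have "\<dots> = (\<Sum>c\<in>UNIV. \<Sum>c'\<in>UNIV. cnj (z $ c) * z $ c' * (if c' = c then 1 else 0))"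
    by (simp only: id)
  also have "\<dots> = (\<Sum>k\<in>UNIV. cnj (z $ k) * z $ k)"
    by (simp only: delta_sum_r)
  finally show ?thesis .
qed


lemma fid_sq_zf: "(fid E \<psi>)\<^sup>2 = Re ((1/2) * (zf E \<psi> * zf E \<psi> + zf E \<psi> * cnj (zf E \<psi>)))"
  by (simp add: fid_zf power2_eq_square algebra_simps) (simp add: field_simps)

lemma polyk_fsq:
  assumes qc: "quantum_channel E"
  shows "polyk 4 (\<lambda>\<psi>. (1/2) * (zf E \<psi> * zf E \<psi> + zf E \<psi> * cnj (zf E \<psi>)))"
proof -
  have a: "polyk (2+2) (\<lambda>\<psi>. zf E \<psi> * zf E \<psi>)" by (rule pk_mult[OF polyk_zf[OF qc] polyk_zf[OF qc]])
  have b: "polyk (2+2) (\<lambda>\<psi>. zf E \<psi> * cnj (zf E \<psi>))" by (rule pk_mult[OF pk_cnj[OF polyk_zf[OF qc]] polyk_zf[OF qc]])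
  have "polyk (2+2) (\<lambda>\<psi>. (1/2) * (zf E \<psi> * zf E \<psi> + zf E \<psi> * cnj (zf E \<psi>)))"
    by (intro pk_cmult pk_add a b)
  then show ?thesis by simp
qed

lemma design_fid:
  fixes E :: "complex^'d^'d \<Rightarrow> complex^'d^'d" and z0 :: "complex^'d" and H \<nu> :: "(complex^'d^'d) measure"
  assumes qc: "quantum_channel E" and des: "unitary_design 4 H \<nu>" and haar: "is_haar H"
  shows "integrable \<nu> (\<lambda>V. fid E (V *v z0))" "integrable H (\<lambda>V. fid E (V *v z0))"
    "(\<integral>V. fid E (V *v z0) \<partial>\<nu>) = (\<integral>V. fid E (V *v z0) \<partial>H)"
    "integrable \<nu> (\<lambda>V. (fid E (V *v z0))\<^sup>2)" "integrable H (\<lambda>V. (fid E (V *v z0))\<^sup>2)"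
    "(\<integral>V. (fid E (V *v z0))\<^sup>2 \<partial>\<nu>) = (\<integral>V. (fid E (V *v z0))\<^sup>2 \<partial>H)"
proof -
  have g1: "good \<nu> H (\<lambda>V. zf E (V *v z0))"
    by (rule polyk_design[OF des haar polyk_zf[OF qc]]) simp
  have g2: "good \<nu> H (\<lambda>V. (1/2) * (zf E (V *v z0) * zf E (V *v z0) + zf E (V *v z0) * cnj (zf E (V *v z0))))"
    by (rule polyk_design[OF des haar polyk_fsq[OF qc]]) simp
  show "integrable \<nu> (\<lambda>V. fid E (V *v z0))" "integrable H (\<lambda>V. fid E (V *v z0))"
    "(\<integral>V. fid E (V *v z0) \<partial>\<nu>) = (\<integral>V. fid E (V *v z0) \<partial>H)"
    using g1 unfolding good_def fid_zf by (auto intro: integrable_Re)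
  show "integrable \<nu> (\<lambda>V. (fid E (V *v z0))\<^sup>2)" "integrable H (\<lambda>V. (fid E (V *v z0))\<^sup>2)"
    "(\<integral>V. (fid E (V *v z0))\<^sup>2 \<partial>\<nu>) = (\<integral>V. (fid E (V *v z0))\<^sup>2 \<partial>H)"
  proof -
    let ?h = "\<lambda>V. (1/2) * (zf E (V *v z0) * zf E (V *v z0) + zf E (V *v z0) * cnj (zf E (V *v z0)))"
    have i1: "integrable \<nu> ?h" and i2: "integrable H ?h" and e: "(\<integral>V. ?h V \<partial>\<nu>) = (\<integral>V. ?h V \<partial>H)"
      using g2 unfolding good_def by auto
    have eq: "(\<lambda>V. (fid E (V *v z0))\<^sup>2) = (\<lambda>V. Re (?h V))" by (simp only: fid_sq_zf)
    show "integrable \<nu> (\<lambda>V. (fid E (V *v z0))\<^sup>2)" unfolding eq by (rule integrable_Re[OF i1])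
    show "integrable H (\<lambda>V. (fid E (V *v z0))\<^sup>2)" unfolding eq by (rule integrable_Re[OF i2])
    show "(\<integral>V. (fid E (V *v z0))\<^sup>2 \<partial>\<nu>) = (\<integral>V. (fid E (V *v z0))\<^sup>2 \<partial>H)"
      unfolding eq integral_Re[OF i1] integral_Re[OF i2] e ..
  qed
qed

lemma state_int:
  fixes E :: "complex^'d^'d \<Rightarrow> complex^'d^'d" and z0 :: "complex^'d" and H :: "(complex^'d^'d) measure"
    and g :: "real \<Rightarrow> real"
  assumes qc: "quantum_channel E" and haar: "is_haar H" and gm: "g \<in> borel_measurable borel"
  shows "(\<integral>\<psi>. g (fid E \<psi>) \<partial>state_measure H z0) = (\<integral>U. g (fid E (U *v z0)) \<partial>H)"
proof -
  have sb: "sets H = sets borel" using haar by (simp add: is_haar_def)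
  have m: "(\<lambda>U. U *v z0) \<in> measurable H borel"
    using meas_mv[of z0] measurable_cong_sets[OF sb refl] by blast
  have f: "(\<lambda>\<psi>. g (fid E \<psi>)) \<in> borel_measurable borel"
    using measurable_compose[OF meas_fid[OF qc] gm] .
  show ?thesis unfolding state_measure_def by (rule integral_distr[OF m f])
qed

theorem proposition7:
  fixes E :: "complex^'d^'d \<Rightarrow> complex^'d^'d"
    and H \<nu> :: "(complex^'d^'d) measure"
    and z0 :: "complex^'d"
    and M N :: nat
  assumes "quantum_channel E"
    and "is_haar H"
    and "norm z0 = 1"
    and "unitary_design 4 H \<nu>"
    and "M \<ge> 2" and "N \<ge> 2"
  defines "F \<equiv> (\<integral>\<psi>. fid E \<psi> \<partial>state_measure H z0)"
    and "D2 \<equiv> (\<integral>\<psi>. (fid E \<psi>)\<^sup>2 \<partial>state_measure H z0) - (\<integral>\<psi>. fid E \<psi> \<partial>state_measure H z0)\<^sup>2"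
    and "P \<equiv> data_law E z0 M N \<nu>"
  shows "(\<integral>\<omega>. (Fhat M N \<omega> - (\<integral>\<omega>'. Fhat M N \<omega>' \<partial>P))\<^sup>2 \<partial>P)
           = D2 / real M + (F - (\<integral>\<psi>. (fid E \<psi>)\<^sup>2 \<partial>state_measure H z0)) / (real M * real N)
       \<and> (\<integral>\<omega>. (Fhat M N \<omega> - (\<integral>\<omega>'. Fhat M N \<omega>' \<partial>P))\<^sup>2 \<partial>P) \<le> D2 / real M + 1 / (4 * real M * real N)"
proof -
  note qc = assms(1) and haar = assms(2) and nz = assms(3) and des = assms(4)
  define S where "S = (\<integral>\<psi>. (fid E \<psi>)\<^sup>2 \<partial>state_measure H z0)"
  have pn: "prob_space \<nu>" and sb: "sets \<nu> = sets borel" and aen: "AE V in \<nu>. is_unitary V"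
    using des AE_unit[of \<nu>] by (auto simp: unitary_design_def)
  have ph: "prob_space H" and sbH: "sets H = sets borel" and aeH: "AE V in H. is_unitary V"
    using haar AE_unit[of H] by (auto simp: is_haar_def)
  interpret pn: prob_space \<nu> by fact
  interpret ph: prob_space H by fact
  let ?K = "Kk E z0 N" and ?Q = "block_law E z0 N \<nu>"
  have QK: "?Q = \<nu> \<bind> ?K" by (rule block_law_Kk)
  have Km: "?K \<in> measurable \<nu> (subprob_algebra (block_space N))" by (rule meas_Kk[OF qc sb])
  have sQ: "sets ?Q = sets (block_space N)" unfolding QK by (rule sets_bind_measurable[OF Km pn.not_empty])
  have pQ: "prob_space ?Q" unfolding QK
    by (rule prob_space_bind'[OF _ measurable_prob_algebraI[OF prob_Kk Km]]) (simp add: space_prob_algebra pn)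
  define p where "p V = pmf (bernoulli_pmf (fid E (V *v z0))) True" for V
  have [measurable]: "(\<lambda>V. fid E (V *v z0)) \<in> borel_measurable \<nu>" by (rule meas_pf[OF qc sb])
  have pm[measurable]: "p \<in> borel_measurable \<nu>" unfolding p_def pmf_bern_gen by measurable
  have p01: "0 \<le> p V" "p V \<le> 1" for V unfolding p_def by (simp_all add: pmf_le_1)
  have nz': "(\<Sum>k\<in>UNIV. cnj (z0 $ k) * z0 $ k) = 1" using nz by (simp add: norm_sq_sum)
  have pfid: "AE V in \<nu>. p V = fid E (V *v z0)"
    using aen
  proof eventually_elim
    case (elim V)
    have "(\<Sum>k\<in>UNIV. cnj ((V *v z0) $ k) * (V *v z0) $ k) = 1" using unitary_norm[OF elim] nz' by simp
    from fid_bounds[OF qc this] show ?case unfolding p_def by simp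
  qed
  note DF = design_fid[OF qc des haar, of z0]
  have FH: "F = (\<integral>U. fid E (U *v z0) \<partial>H)"
    unfolding F_def using state_int[OF qc haar, of "\<lambda>x. x"] by simp
  have SH: "S = (\<integral>U. (fid E (U *v z0))\<^sup>2 \<partial>H)"
    unfolding S_def using state_int[OF qc haar, of "\<lambda>x. x\<^sup>2"] by simp
  have ip: "integrable \<nu> p"
    by (rule pn.integrable_const_bound[where B=1]) (use p01 in auto)
  have ip2: "integrable \<nu> (\<lambda>V. (p V)\<^sup>2)"
    by (rule pn.integrable_const_bound[where B=1]) (use p01 in \<open>auto simp: power_le_one\<close>)
  have Fp: "(\<integral>V. p V \<partial>\<nu>) = F"
  proof -
    have "(\<integral>V. p V \<partial>\<nu>) = (\<integral>V. fid E (V *v z0) \<partial>\<nu>)"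
      by (rule integral_cong_AE) (use pfid in auto)
    then show ?thesis using DF(3) FH by simp
  qed
  have Sp: "(\<integral>V. (p V)\<^sup>2 \<partial>\<nu>) = S"
  proof -
    have "(\<integral>V. (p V)\<^sup>2 \<partial>\<nu>) = (\<integral>V. (fid E (V *v z0))\<^sup>2 \<partial>\<nu>)"
      by (rule integral_cong_AE) (use pfid in auto)
    then show ?thesis using DF(6) SH by simp
  qed
  have a: "(\<integral>\<omega>. Yf N \<omega> \<partial>?Q) = real N * F"
  proof -
    have "(\<integral>\<omega>. Yf N \<omega> \<partial>?Q) = (\<integral>V. real N * p V \<partial>\<nu>)"
      unfolding QK
    proof (rule integral_bind_closed[OF pn Km prob_Kk meas_Yf Yf_bounds(1) Yf_bounds(2)])
      show "(\<lambda>V. real N * p V) \<in> borel_measurable \<nu>" by measurable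
    qed (simp add: int_Kk(1) p_def)
    then show ?thesis using Fp by simp
  qed
  have b: "(\<integral>\<omega>. (Yf N \<omega>)\<^sup>2 \<partial>?Q) = real N * F + real N * (real N - 1) * S"
  proof -
    have "(\<integral>\<omega>. (Yf N \<omega>)\<^sup>2 \<partial>?Q) = (\<integral>V. real N * p V + real N * (real N - 1) * (p V)\<^sup>2 \<partial>\<nu>)"
      unfolding QK
    proof (rule integral_bind_closed[OF pn Km prob_Kk, where C="(real N)\<^sup>2"])
      show "(\<lambda>V. real N * p V + real N * (real N - 1) * (p V)\<^sup>2) \<in> borel_measurable \<nu>" by measurable
      show "(\<lambda>\<omega>. (Yf N \<omega>)\<^sup>2) \<in> borel_measurable (block_space N)" by measurable
    qed (auto simp: int_Kk(2) p_def Yf_bounds power_mono)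
    also have "\<dots> = real N * (\<integral>V. p V \<partial>\<nu>) + real N * (real N - 1) * (\<integral>V. (p V)\<^sup>2 \<partial>\<nu>)"
      using ip ip2 by simp
    finally show ?thesis using Fp Sp by simp
  qed
  have Ym: "Yf N \<in> borel_measurable ?Q" using meas_Yf measurable_cong_sets[OF sQ refl] by blast
  have Yb: "\<And>x. x \<in> space ?Q \<Longrightarrow> \<bar>Yf N x\<bar> \<le> real N" by (metis Yf_bounds abs_of_nonneg)
  note SS = pim_sums[OF pQ finite_lessThan[of M] Ym Yb]
  have PQ: "P = PiM {..<M} (\<lambda>_. ?Q)" unfolding P_def data_law_def ..
  have Fh: "Fhat M N \<omega> = (1 / (real M * real N)) * (\<Sum>i\<in>{..<M}. Yf N (\<omega> i))" for \<omega>
    by (simp add: Fhat_def Yf_def)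
  interpret pP: prob_space P unfolding PQ by (rule prob_space_PiM) (rule pQ)
  define c where "c = 1 / (real M * real N)"
  define Sm where "Sm \<omega> = (\<Sum>i\<in>{..<M}. Yf N (\<omega> i))" for \<omega> :: "nat \<Rightarrow> (complex^'d^'d) \<times> (nat \<Rightarrow> bool)"
  have iS: "integrable P Sm" and iS2: "integrable P (\<lambda>\<omega>. (Sm \<omega>)\<^sup>2)"
    unfolding PQ Sm_def using SS(1,2) by auto
  have ES: "(\<integral>\<omega>. Sm \<omega> \<partial>P) = real M * (real N * F)"
    unfolding PQ Sm_def using SS(3) a by simp
  have ES2: "(\<integral>\<omega>. (Sm \<omega>)\<^sup>2 \<partial>P) = real M * (real N * F + real N * (real N - 1) * S) + real M * (real M - 1) * (real N * F)\<^sup>2"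
    unfolding PQ Sm_def using SS(4) a b by simp
  have Fh': "Fhat M N = (\<lambda>\<omega>. c * Sm \<omega>)" unfolding c_def Sm_def by (rule ext) (rule Fh)
  define mu where "mu = c * (real M * (real N * F))"
  have Emu: "(\<integral>\<omega>'. Fhat M N \<omega>' \<partial>P) = mu" unfolding Fh' mu_def using ES by simp
  have "(\<integral>\<omega>. (Fhat M N \<omega> - (\<integral>\<omega>'. Fhat M N \<omega>' \<partial>P))\<^sup>2 \<partial>P)
      = (\<integral>\<omega>. c\<^sup>2 * (Sm \<omega>)\<^sup>2 - 2 * c * mu * Sm \<omega> + mu\<^sup>2 \<partial>P)"
    unfolding Emu unfolding Fh' by (rule Bochner_Integration.integral_cong) (simp_all add: power2_eq_square algebra_simps)
  also have "\<dots> = c\<^sup>2 * (\<integral>\<omega>. (Sm \<omega>)\<^sup>2 \<partial>P) - 2 * c * mu * (\<integral>\<omega>. Sm \<omega> \<partial>P) + mu\<^sup>2"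
    using iS iS2 by (simp add: pP.prob_space)
  also have "\<dots> = D2 / real M + (F - S) / (real M * real N)"
    unfolding ES ES2 mu_def c_def D2_def F_def[symmetric] S_def[symmetric]
    using assms(5,6) by (simp add: field_simps power2_eq_square)
  finally have var: "(\<integral>\<omega>. (Fhat M N \<omega> - (\<integral>\<omega>'. Fhat M N \<omega>' \<partial>P))\<^sup>2 \<partial>P) = D2 / real M + (F - S) / (real M * real N)" .
  have FS: "F - S \<le> 1/4"
  proof -
    have "F - S = (\<integral>U. fid E (U *v z0) - (fid E (U *v z0))\<^sup>2 \<partial>H)"
      unfolding FH SH using DF(2,5) by simp
    also have "\<dots> \<le> (\<integral>U. 1/4 \<partial>H)"
    proof (rule integral_mono)
      show "integrable H (\<lambda>U. fid E (U *v z0) - (fid E (U *v z0))\<^sup>2)" using DF(2,5) by simp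
      show "integrable H (\<lambda>U. 1/4 :: real)" by simp
      fix U show "fid E (U *v z0) - (fid E (U *v z0))\<^sup>2 \<le> 1/4"
        using sum_squares_ge_zero[of "fid E (U *v z0) - 1/2" 0] by (simp add: power2_eq_square algebra_simps)
    qed
    also have "\<dots> = 1/4" by (simp add: ph.prob_space)
    finally show ?thesis .
  qed
  have "(F - S) / (real M * real N) \<le> (1/4) / (real M * real N)"
    using FS assms(5,6) by (intro divide_right_mono) auto
  then show ?thesis using var unfolding S_def by (simp add: field_simps)
qed

end
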